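(* $Lex_{AB}$ is not universal: there is an epistemic space $\mathbb{S}$ that is identifiable in the limit but is not identifiable in the limit by $Lex_{AB}$.
   Context: An epistemic space is a pair $\mathbb{S}=(S,\mathcal{O})$ where $S$ is a non-empty, at most countable set of worlds and $\mathcal{O}\subseteq\mathcal{P}(S)$ is a set of observables. A data stream is an infinite sequence $\vec O=(O_0,O_1,\ldots)$ of elements of $\mathcal{O}$; $\vec O[n]=(O_0,\ldots,O_{n-1})$; it is sound for $s$ if $s\in O_n$ for all $n$ and complete for $s$ if every $O\in\mathcal{O}$ with $s\in O$ occurs in it. $\mathbb{S}$ is identifiable in the limit if some learner (map from finite sequences to subsets of $S$) outputs $\{s\}$ on all sufficiently long initial segments of every stream sound and complete for $s$, for every $s\in S$. A plausibility space is $\mathbb{B}=(S,\mathcal{O},\preceq)$, $\preceq$ a total preorder on $S$; $\min_\preceq X$ is the set of $\preceq$-minimal elements of $X$. Lexicographic revision: for $p\subseteq S$, $\bar p=S\setminus p$, $Lex_1(\mathbb{B},p)=(S,\mathcal{O},\preceq')$ with $t\preceq' w$ iff ($t,w\in p$ and $t\preceq w$) or ($t,w\in\bar p$ and $t\preceq w$) or ($t\in p$, $w\notin p$). Upgrade: for a preorder $\preceq$ on $S$ and $x\in S$, ${\preceq}\uparrow x=({\preceq}\cap((S\setminus\{x\})\times(S\setminus\{x\})))\cup\{(x,s)\mid s\in S\setminus\{x\}\}$. Anchored lexicographic revision: if $Lex_1(\mathbb{B},p)=(S,\mathcal{O},\preceq')$, then $Lex^+_1(\mathbb{B},p)=(S,\mathcal{O},\preceq')$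 if $|\min_{\preceq'}S|=1$, and otherwise $Lex^+_1(\mathbb{B},p)=(S,\mathcal{O},{\preceq'}\uparrow x)$ for some (randomly chosen) $x\in\min_{\preceq'}S$. The anchoring-biased method: $Lex_{AB}(\mathbb{B},\lambda)=\mathbb{B}$ and $Lex_{AB}(\mathbb{B},\sigma\cdot p)=Lex^+_1(Lex_{AB}(\mathbb{B},\sigma),\min_{\preceq_{AB}}(S\cap p))$, where $Lex_{AB}(\mathbb{B},\sigma)=(S,\mathcal{O},\preceq_{AB})$. Its conjecture on $\sigma$ is the set of minimal worlds of $Lex_{AB}((S,\mathcal{O},\preceq),\sigma)$. $\mathbb{S}$ is identifiable in the limit by $Lex_{AB}$ if there is a total preorder $\preceq$ on $S$ such that for every $s\in S$, every stream sound and complete for $s$, and every resolution of the random choices, the conjecture on $\vec O[n]$ is $\{s\}$ for all sufficiently large $n$. *)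

theory Defs
  imports Main "HOL-Library.Countable_Set"
begin

definition epistemic_space :: "'w set \<Rightarrow> 'w set set \<Rightarrow> bool" where
  "epistemic_space S Ob \<longleftrightarrow> S \<noteq> {} \<and> countable S \<and> Ob \<subseteq> Pow S"

definition data_stream :: "'w set set \<Rightarrow> (nat \<Rightarrow> 'w set) \<Rightarrow> bool" where
  "data_stream Ob D \<longleftrightarrow> (\<forall>n. D n \<in> Ob)"

definition sound_for :: "(nat \<Rightarrow> 'w set) \<Rightarrow> 'w \<Rightarrow> bool" where
  "sound_for D s \<longleftrightarrow> (\<forall>n. s \<in> D n)"

definition complete_for :: "'w set set \<Rightarrow> (nat \<Rightarrow> 'w set) \<Rightarrow> 'w \<Rightarrow> bool" where
  "complete_for Ob D s \<longleftrightarrow> (\<forall>X\<in>Ob. s \<in> X \<longrightarrow> (\<exists>n. D n = X))"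

definition init_seg :: "(nat \<Rightarrow> 'w set) \<Rightarrow> nat \<Rightarrow> 'w set list" where
  "init_seg D n = map D [0..<n]"

definition identifiable :: "'w set \<Rightarrow> 'w set set \<Rightarrow> bool" where
  "identifiable S Ob \<longleftrightarrow>
     (\<exists>L :: 'w set list \<Rightarrow> 'w set. \<forall>s\<in>S. \<forall>D. data_stream Ob D \<and> sound_for D s \<and> complete_for Ob D s
        \<longrightarrow> (\<exists>N. \<forall>n\<ge>N. L (init_seg D n) = {s}))"

text \<open>Preorders are relations on S (pairs (t,w) meaning t \<preceq> w).\<close>
definition total_preorder_on :: "'w set \<Rightarrow> 'w rel \<Rightarrow> bool" where
  "total_preorder_on S r \<longleftrightarrow> r \<subseteq> S \<times> S \<and> preorder_on S r \<and> total_on S r"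

definition minset :: "'w rel \<Rightarrow> 'w set \<Rightarrow> 'w set" where
  "minset r X = {x \<in> X. \<forall>y\<in>X. (y, x) \<in> r \<longrightarrow> (x, y) \<in> r}"

definition lex1 :: "'w set \<Rightarrow> 'w rel \<Rightarrow> 'w set \<Rightarrow> 'w rel" where
  "lex1 S r p = {(t, w). t \<in> S \<and> w \<in> S \<and>
      ((t \<in> p \<and> w \<in> p \<and> (t, w) \<in> r) \<or> (t \<notin> p \<and> w \<notin> p \<and> (t, w) \<in> r) \<or> (t \<in> p \<and> w \<notin> p))}"

definition upgrade :: "'w set \<Rightarrow> 'w rel \<Rightarrow> 'w \<Rightarrow> 'w rel" where
  "upgrade S r x = (r \<inter> ((S - {x}) \<times> (S - {x}))) \<union> {(x, s) | s. s \<in> S - {x}}"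

text \<open>The random choice is resolved by a choice
  function ch, which receives the current history and the set of minimal worlds.
  (If there are no minimal worlds, no anchoring is possible and the order is left unchanged.)\<close>
definition lex_plus :: "'w set \<Rightarrow> 'w rel \<Rightarrow> 'w set \<Rightarrow> 'w \<Rightarrow> 'w rel" where
  "lex_plus S r p x =
     (let r' = lex1 S r p; M = minset r' S in
      if card M = 1 \<or> M = {} then r' else upgrade S r' x)"

primrec lexab_rev :: "'w set \<Rightarrow> 'w rel \<Rightarrow> ('w set list \<Rightarrow> 'w set \<Rightarrow> 'w) \<Rightarrow> 'w set list \<Rightarrow> 'w rel" where
  "lexab_rev S r ch [] = r"
| "lexab_rev S r ch (p # \<tau>) =
     (let q = lexab_rev S r ch \<tau>; r' = lex1 S q (minset q (S \<inter> p)) in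
      lex_plus S q (minset q (S \<inter> p)) (ch (rev (p # \<tau>)) (minset r' S)))"

definition lexab :: "'w set \<Rightarrow> 'w rel \<Rightarrow> ('w set list \<Rightarrow> 'w set \<Rightarrow> 'w) \<Rightarrow> 'w set list \<Rightarrow> 'w rel" where
  "lexab S r ch \<sigma> = lexab_rev S r ch (rev \<sigma>)"

definition valid_choice :: "('w set list \<Rightarrow> 'w set \<Rightarrow> 'w) \<Rightarrow> bool" where
  "valid_choice ch \<longleftrightarrow> (\<forall>\<sigma> X. X \<noteq> {} \<longrightarrow> ch \<sigma> X \<in> X)"

definition lexab_identifiable :: "'w set \<Rightarrow> 'w set set \<Rightarrow> bool" where
  "lexab_identifiable S Ob \<longleftrightarrow>
     (\<exists>r. total_preorder_on S r \<and>
        (\<forall>s\<in>S. \<forall>D. data_stream Ob D \<and> sound_for D s \<and> complete_for Ob D s \<longrightarrow>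
           (\<forall>ch. valid_choice ch \<longrightarrow>
              (\<exists>N. \<forall>n\<ge>N. minset (lexab S r ch (init_seg D n)) S = {s}))))"

end

theory Submission
  imports Defs
begin

definition ch0 :: "nat set list \<Rightarrow> nat set \<Rightarrow> nat" where
  "ch0 \<sigma> X = (if 0 \<in> X then 0 else (SOME x. x \<in> X))"

lemma ch0_valid: "valid_choice ch0"
  unfolding valid_choice_def ch0_def by (auto intro: someI_ex)

lemma lexab_Suc:
  "lexab S r ch (init_seg D (Suc n)) =
    (let q = lexab S r ch (init_seg D n); P = minset q (S \<inter> D n) in
     lex_plus S q P (ch (init_seg D (Suc n)) (minset (lex1 S q P) S)))"
  unfolding lexab_def init_seg_def by (simp add: Let_def)

lemma stepA:
  fixes q :: "nat rel" and a :: nat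
  assumes a: "a \<in> {1,2}" and q: "(0,a) \<in> q"
  and S: "S = {0,1,2::nat}"
  and P: "P = minset q (S \<inter> {0,a})"
  and R: "R = lex_plus S q P (ch0 \<sigma> (minset (lex1 S q P) S))"
  shows "(0,a) \<in> R \<and> 0 \<in> minset R S"
proof -
  have P0: "0 \<in> P" using q a unfolding P S minset_def by auto
  have Psub: "P \<subseteq> {0,a}" unfolding P minset_def by auto
  have r1: "(0,a) \<in> lex1 S q P" using P0 Psub q a unfolding lex1_def S by auto
  have M0: "0 \<in> minset (lex1 S q P) S"
  proof -
    have "(0, y) \<in> lex1 S q P" if "y \<in> S" "(y,0) \<in> lex1 S q P" for y
    proof -
      have "y \<in> P" using that P0 unfolding lex1_def by auto
      then have "y = 0 \<or> y = a" using Psub by auto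
      then show ?thesis using that r1 by auto
    qed
    then show ?thesis unfolding minset_def S by auto
  qed
  show ?thesis
  proof (cases "card (minset (lex1 S q P) S) = 1 \<or> minset (lex1 S q P) S = {}")
    case True
    then have "R = lex1 S q P" unfolding R lex_plus_def Let_def by auto
    then show ?thesis using r1 M0 by auto
  next
    case False
    then have "R = upgrade S (lex1 S q P) 0" unfolding R lex_plus_def Let_def ch0_def
      using M0 by auto
    then show ?thesis using a unfolding upgrade_def minset_def S by auto
  qed
qed

definition Z :: "nat \<Rightarrow> nat \<Rightarrow> nat rel \<Rightarrow> bool" where
  "Z a b q \<longleftrightarrow> (a,0) \<in> q \<and> (0,a) \<notin> q \<and> (b,0) \<in> q \<and> (0,b) \<notin> q"

lemma Z_min: "Z a b q \<Longrightarrow> a \<in> S \<Longrightarrow> 0 \<notin> minset q S"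
  unfolding Z_def minset_def by auto

lemma stepC:
  fixes q :: "nat rel" and a b :: nat
  assumes a: "a \<in> {1,2}" and b: "b \<in> {1,2}" and ab: "a \<noteq> b" and q: "Z a b q"
  and S: "S = {0,1,2::nat}"
  and P: "P = minset q (S \<inter> {0,a})"
  and R: "R = lex_plus S q P (ch0 \<sigma> (minset (lex1 S q P) S))"
  shows "Z a b R"
proof -
  have Pa: "P = {a}" using q a unfolding P S minset_def Z_def by auto
  have r1: "Z a b (lex1 S q P)" using q a b ab unfolding Pa lex1_def S Z_def by auto
  have M0: "0 \<notin> minset (lex1 S q P) S" using Z_min[OF r1] a S by auto
  show ?thesis
  proof (cases "card (minset (lex1 S q P) S) = 1 \<or> minset (lex1 S q P) S = {}")
    case True
    then have "R = lex1 S q P" unfolding R lex_plus_def Let_def by auto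
    then show ?thesis using r1 by auto
  next
    case False
    define x where "x = ch0 \<sigma> (minset (lex1 S q P) S)"
    have "x \<in> minset (lex1 S q P) S" using False ch0_valid unfolding valid_choice_def x_def
      by blast
    then have x0: "x \<noteq> 0" using M0 by metis
    have xS: "x \<in> S" using \<open>x \<in> _\<close> unfolding minset_def by auto
    have "R = upgrade S (lex1 S q P) x" unfolding R lex_plus_def Let_def x_def
      using False by auto
    then show ?thesis using r1 x0 a b xS unfolding upgrade_def Z_def S by auto
  qed
qed

lemma seqA:
  assumes a: "a \<in> {1,2::nat}" and r: "(0,a) \<in> r"
  and S: "S = {0,1,2::nat}"
  shows "(0,a) \<in> lexab S r ch0 (init_seg (\<lambda>_. {0,a}) n) \<and>
         (n > 0 \<longrightarrow> 0 \<in> minset (lexab S r ch0 (init_seg (\<lambda>_. {0,a}) n)) S)"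
proof (induction n)
  case 0
  then show ?case using r unfolding lexab_def init_seg_def by simp
next
  case (Suc n)
  show ?case
    unfolding lexab_Suc Let_def
    using stepA[OF a conjunct1[OF Suc.IH] S refl refl] by simp
qed

lemma seqC:
  assumes r: "Z 1 2 r"
  and S: "S = {0,1,2::nat}"
  and D: "D = (\<lambda>n::nat. if even n then {0,1} else {0,2::nat})"
  shows "Z 1 2 (lexab S r ch0 (init_seg D n))"
proof (induction n)
  case 0
  then show ?case using r unfolding lexab_def init_seg_def by simp
next
  case (Suc n)
  show ?case
  proof (cases "even n")
    case True
    then show ?thesis
      unfolding lexab_Suc Let_def using stepC[of 1 2, OF _ _ _ Suc.IH S refl refl] D by simp
  next
    case False
    have Z': "Z 2 1 (lexab S r ch0 (init_seg D n))" using Suc.IH unfolding Z_def by auto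
    have "Z 2 1 (lexab S r ch0 (init_seg D (Suc n)))"
      unfolding lexab_Suc Let_def using stepC[of 2 1, OF _ _ _ Z' S refl refl] D False by simp
    then show ?thesis unfolding Z_def by auto
  qed
qed

theorem mainTheorem7:
  shows "\<exists>(S :: nat set) Ob. epistemic_space S Ob \<and> identifiable S Ob \<and> \<not> lexab_identifiable S Ob"
proof (intro exI conjI)
  define S :: "nat set" where "S = {0,1,2}"
  define Ob :: "nat set set" where "Ob = {{0,1},{0,2}}"
  show "epistemic_space S Ob" unfolding epistemic_space_def S_def Ob_def by auto
  show "identifiable S Ob"
  proof -
    define L :: "nat set list \<Rightarrow> nat set" where "L \<sigma> =
      (if {0,1} \<in> set \<sigma> \<and> {0,2} \<in> set \<sigma> then {0}
       else if {0,1} \<in> set \<sigma> then {1} else if {0,2} \<in> set \<sigma> then {2} else {0})" for \<sigma>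
    have "\<exists>N. \<forall>n\<ge>N. L (init_seg D n) = {s}"
      if s: "s \<in> S" and D: "data_stream Ob D" "sound_for D s" "complete_for Ob D s" for s D
    proof -
      have Dn: "D n \<in> Ob" "s \<in> D n" for n using D unfolding data_stream_def sound_for_def by auto
      have seg: "X \<in> set (init_seg D n) \<longleftrightarrow> (\<exists>k<n. D k = X)" for X n
        unfolding init_seg_def by auto
      have ne: "{0,1::nat} \<noteq> {0,2}"
      proof
        assume "{0,1::nat} = {0,2}"
        then have "(1::nat) \<in> {0,2}" by (metis insertI1 insert_commute)
        then show False by simp
      qed
      consider "s = 0" | "s = 1" | "s = 2" using s S_def by auto
      then show ?thesis
      proof cases
        case 1
        obtain k1 where k1: "D k1 = {0,1}" using D(3) 1 unfolding complete_for_def Ob_def by auto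
        obtain k2 where k2: "D k2 = {0,2}" using D(3) 1 unfolding complete_for_def Ob_def by auto
        show ?thesis
        proof (intro exI allI impI)
          fix n assume n: "Suc (max k1 k2) \<le> n"
          have "{0,1} \<in> set (init_seg D n)" "{0,2} \<in> set (init_seg D n)"
          proof -
            have "k1 < n" "k2 < n" using n by auto
            then show "{0,1} \<in> set (init_seg D n)" "{0,2} \<in> set (init_seg D n)"
              unfolding seg using k1 k2 by blast+
          qed
          then show "L (init_seg D n) = {s}" using 1 by (simp add: L_def)
        qed
      next
        case 2
        obtain k1 where k1: "D k1 = {0,1}" using D(3) 2 unfolding complete_for_def Ob_def by auto
        have "D k = {0,1}" for k
        proof -
          have "D k = {0,1} \<or> D k = {0,2}" using Dn(1)[of k] unfolding Ob_def by blast
          moreover have "s \<in> D k" by (rule Dn(2))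
          moreover have "s \<notin> {0,2}" using 2 by simp
          ultimately show ?thesis by metis
        qed
        then have "\<not> (\<exists>k<n. D k = {0,2})" for n using ne by metis
        then show ?thesis
        proof (intro exI allI impI)
          fix n assume n: "Suc k1 \<le> n"
          have "{0,1} \<in> set (init_seg D n)"
          proof -
            have "k1 < n" using n by auto
            then show ?thesis unfolding seg using k1 by blast
          qed
          moreover have "{0,2} \<notin> set (init_seg D n)" unfolding seg by fact
          ultimately show "L (init_seg D n) = {s}" unfolding L_def using 2 by simp
        qed
      next
        case 3
        obtain k1 where k1: "D k1 = {0,2}" using D(3) 3 unfolding complete_for_def Ob_def by auto
        have "D k = {0,2}" for k
        proof -
          have "D k = {0,1} \<or> D k = {0,2}" using Dn(1)[of k] unfolding Ob_def by blast
          moreover have "s \<in> D k" by (rule Dn(2))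
          moreover have "s \<notin> {0,1}" using 3 by simp
          ultimately show ?thesis by metis
        qed
        then have "\<not> (\<exists>k<n. D k = {0,1})" for n using ne by metis
        then show ?thesis
        proof (intro exI allI impI)
          fix n assume n: "Suc k1 \<le> n"
          have "{0,2} \<in> set (init_seg D n)"
          proof -
            have "k1 < n" using n by auto
            then show ?thesis unfolding seg using k1 by blast
          qed
          moreover have "{0,1} \<notin> set (init_seg D n)" unfolding seg by fact
          ultimately show "L (init_seg D n) = {s}" unfolding L_def using 3 by simp
        qed
      qed
    qed
    note key = this
    show ?thesis unfolding identifiable_def
    proof (intro exI[of _ L] ballI allI impI)
      fix s D assume "s \<in> S" "data_stream Ob D \<and> sound_for D s \<and> complete_for Ob D s"
      then show "\<exists>N. \<forall>n\<ge>N. L (init_seg D n) = {s}" using key by blast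
    qed
  qed
  show "\<not> lexab_identifiable S Ob"
    unfolding lexab_identifiable_def
  proof
    assume "\<exists>r. total_preorder_on S r \<and>
        (\<forall>s\<in>S. \<forall>D. data_stream Ob D \<and> sound_for D s \<and> complete_for Ob D s \<longrightarrow>
           (\<forall>ch. valid_choice ch \<longrightarrow>
              (\<exists>N. \<forall>n\<ge>N. minset (lexab S r ch (init_seg D n)) S = {s})))"
    then obtain r where tp: "total_preorder_on S r" and
      H: "\<And>s D ch. s \<in> S \<Longrightarrow> data_stream Ob D \<Longrightarrow> sound_for D s \<Longrightarrow> complete_for Ob D s \<Longrightarrow>
           valid_choice ch \<Longrightarrow> \<exists>N. \<forall>n\<ge>N. minset (lexab S r ch (init_seg D n)) S = {s}"
      by blast
    have A: False if a: "a \<in> {1,2}" and ra: "(0,a) \<in> r" for a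
    proof -
      have "data_stream Ob (\<lambda>_. {0,a})" using a unfolding data_stream_def Ob_def by auto
      moreover have "sound_for (\<lambda>_. {0,a}) a" unfolding sound_for_def by auto
      moreover have "complete_for Ob (\<lambda>_. {0,a}) a" using a unfolding complete_for_def Ob_def by auto
      moreover have "a \<in> S" using a S_def by auto
      ultimately obtain N where N: "\<forall>n\<ge>N. minset (lexab S r ch0 (init_seg (\<lambda>_. {0,a}) n)) S = {a}"
        using H ch0_valid by blast
      have "0 \<in> minset (lexab S r ch0 (init_seg (\<lambda>_. {0,a}) (Suc N))) S"
        using seqA[OF a ra S_def, of "Suc N"] by simp
      then show False using N[rule_format, of "Suc N"] a by auto
    qed
    have tot: "(0,1) \<in> r \<or> (1,0) \<in> r" "(0,2) \<in> r \<or> (2,0) \<in> r"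
      using tp unfolding total_preorder_on_def total_on_def S_def by auto
    have Zr: "Z 1 2 r" using A[of 1] A[of 2] tot unfolding Z_def by auto
    define D where "D = (\<lambda>n::nat. if even n then {0,1} else {0,2::nat})"
    have "data_stream Ob D" unfolding data_stream_def Ob_def D_def by auto
    moreover have "sound_for D 0" unfolding sound_for_def D_def by auto
    moreover have "complete_for Ob D 0"
    proof -
      have "D 0 = {0,1}" "D 1 = {0,2}" unfolding D_def by auto
      then show ?thesis unfolding complete_for_def Ob_def by blast
    qed
    moreover have "(0::nat) \<in> S" using S_def by auto
    ultimately obtain N where N: "\<forall>n\<ge>N. minset (lexab S r ch0 (init_seg D n)) S = {0}"
      using H ch0_valid by blast
    have "0 \<notin> minset (lexab S r ch0 (init_seg D N)) S"
      using Z_min[OF seqC[OF Zr S_def D_def, of N]] S_def by auto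
    then show False using N by auto
  qed
qed

end
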